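(* Let $q\in X^*\setminus\{e\}$ and let $q_0$ be the shortest word in $P_q$. If $|q_0|$ does not divide $|q|$ and $|q_0|\le|q|/2$, then there exists $q'\in X^*\setminus\{e\}$ with $P_q^*\subsetneq P_{q'}^*$. Consequently, if $|q_0|$ does not divide $|q|$ and $P_q^*$ is maximal with respect to inclusion in the class $\{P_{q'}^*: q'\in X^*\setminus\{e\}\}$, then $|q_0|>|q|/2$.
   Context: $X$ is a finite alphabet; $X^*$ the finite words (empty word $e$); $|w|$ is length; $w\sqsubseteq\eta$ means $w$ is a prefix of $\eta$, $w\sqsubset\eta$ a proper prefix. For $q\in X^*\setminus\{e\}$, $P_q:=\{v: e\sqsubset v\sqsubseteq q\sqsubset v\cdot q\}$; $q_0$ is its shortest element. $L^*=\bigcup_{i\in\mathbb{N}}L^i$. *)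

theory Defs
  imports Complex_Main "HOL-Library.Sublist"
begin

definition Pq :: "'a list \<Rightarrow> 'a list set" where
  "Pq q = {v. strict_prefix [] v \<and> prefix v q \<and> strict_prefix q (v @ q)}"

definition lconc :: "'a list set \<Rightarrow> 'a list set \<Rightarrow> 'a list set" where
  "lconc A B = {u @ v | u v. u \<in> A \<and> v \<in> B}"

fun lpow :: "'a list set \<Rightarrow> nat \<Rightarrow> 'a list set" where
  "lpow L 0 = {[]}"
| "lpow L (Suc n) = lconc L (lpow L n)"

definition lstar :: "'a list set \<Rightarrow> 'a list set" where
  "lstar L = (\<Union>i. lpow L i)"

end

theory Submission imports Defs begin

definition per :: "'a list \<Rightarrow> nat \<Rightarrow> bool" where
  "per w p \<longleftrightarrow> (\<forall>i. p \<le> i \<and> i < length w \<longrightarrow> w!i = w!(i-p))"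

lemma prefix_nth: "prefix xs ys \<longleftrightarrow> length xs \<le> length ys \<and> (\<forall>i<length xs. xs!i = ys!i)"
proof
  assume "prefix xs ys" then obtain zs where "ys = xs @ zs" by (auto simp: prefix_def)
  then show "length xs \<le> length ys \<and> (\<forall>i<length xs. xs!i = ys!i)" by (auto simp: nth_append)
next
  assume h: "length xs \<le> length ys \<and> (\<forall>i<length xs. xs!i = ys!i)"
  have "take (length xs) ys = xs" using h by (intro nth_equalityI) auto
  then have "ys = xs @ drop (length xs) ys" by (metis append_take_drop_id)
  then show "prefix xs ys" by (auto simp: prefix_def)
qed

lemma Pq_iff: "v \<in> Pq q \<longleftrightarrow> v = take (length v) q \<and> 0 < length v \<and> length v \<le> length q \<and> per q (length v)"
proof -
  have A: "strict_prefix q (v @ q) \<longleftrightarrow> prefix q (v@q)" if "v \<noteq> []" using that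
    by (auto simp: strict_prefix_def)
  have B: "prefix v q \<longleftrightarrow> v = take (length v) q \<and> length v \<le> length q"
    by (auto simp: prefix_nth intro!: nth_equalityI) (metis nth_take)+
  have C: "prefix q (v@q) \<longleftrightarrow> per q (length v)" if "prefix v q"
  proof -
    have vi: "\<forall>i<length v. v!i = q!i" "length v \<le> length q" using that by (auto simp: prefix_nth)
    show ?thesis unfolding prefix_nth per_def
    proof (intro iffI allI impI conjI)
      fix i assume h: "length q \<le> length (v @ q) \<and> (\<forall>i<length q. q ! i = (v @ q) ! i)" "length v \<le> i \<and> i < length q"
      then show "q!i = q!(i - length v)" by (auto simp: nth_append)
    next
      show "length q \<le> length (v @ q)" by simp
    next
      fix i assume h: "\<forall>i. length v \<le> i \<and> i < length q \<longrightarrow> q ! i = q ! (i - length v)" "i < length q"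
      then show "q ! i = (v @ q) ! i" using vi by (auto simp: nth_append)
    qed
  qed
  show ?thesis unfolding Pq_def using A B C
    by (auto simp: strict_prefix_def) 
qed

lemma per_sub: assumes "per w p" "per w r" "p < r" "r + p \<le> length w" shows "per w (r - p)"
  unfolding per_def
proof (intro allI impI)
  fix i assume i: "r - p \<le> i \<and> i < length w"
  show "w!i = w!(i-(r-p))"
  proof (cases "r \<le> i")
    case True
    have 1: "w!i = w!(i-r)" using assms(2) i True unfolding per_def by blast
    have j: "p \<le> i-(r-p)" "i-(r-p) < length w" using assms(3) i True by auto
    have 2: "w!(i-(r-p)) = w!(i-(r-p)-p)" using assms(1) j unfolding per_def by blast
    have 3: "i-(r-p)-p = i - r" using assms(3) True by auto
    show ?thesis using 1 2 3 by metis
  next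
    case False
    have le1: "p \<le> i+p" "i+p < length w" "r \<le> i+p" using assms(3,4) i False by auto
    have 1: "w!(i+p) = w!(i+p-p)" using assms(1) le1 unfolding per_def by blast
    have 2: "w!(i+p) = w!(i+p-r)" using assms(2) le1 unfolding per_def by blast
    have 3: "i+p-r = i-(r-p)" "i+p-p = i" using i assms(3) False by auto
    show ?thesis using 1 2 3 by metis
  qed
qed

lemma fine_wilf: "per w p \<Longrightarrow> per w r \<Longrightarrow> 0 < p \<Longrightarrow> 0 < r \<Longrightarrow> p + r \<le> length w \<Longrightarrow> per w (gcd p r)"
proof (induction "p + r" arbitrary: p r rule: less_induct)
  case less
  show ?case
  proof (cases p r rule: linorder_cases)
    case less2: less
    have le: "r + p \<le> length w" using less(6) by linarith
    have a: "per w (r - p)" by (rule per_sub[OF less(2) less(3) less2 le])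
    have b: "p + (r - p) < p + r" "0 < r - p" "p + (r - p) \<le> length w" using less2 less(4,6) by linarith+
    have "per w (gcd p (r - p))" by (rule less.hyps[OF b(1) less(2) a less(4) b(2) b(3)])
    moreover have "gcd p (r - p) = gcd p r" using less2 gcd_add2[of p "r - p"] by simp
    ultimately show ?thesis by simp
  next
    case equal then show ?thesis using less(2) by simp
  next
    case greater
    have le: "p + r \<le> length w" using less(6) by linarith
    have a: "per w (p - r)" by (rule per_sub[OF less(3) less(2) greater le])
    have b: "(p - r) + r < p + r" "0 < p - r" "(p - r) + r \<le> length w" using greater less(5,6) by linarith+
    have "per w (gcd (p - r) r)" by (rule less.hyps[OF b(1) a less(3) b(2) less(5) b(3)])
    moreover have "gcd (p - r) r = gcd p r" using greater by (simp add: gcd_diff1_nat)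
    ultimately show ?thesis by simp
  qed
qed

lemma lstar_app: assumes "x \<in> lstar M" "y \<in> lstar M" shows "x @ y \<in> lstar M"
proof -
  obtain n where "x \<in> lpow M n" using assms(1) by (auto simp: lstar_def)
  then show ?thesis
  proof (induction n arbitrary: x)
    case 0 then show ?case using assms(2) by simp
  next
    case (Suc n)
    then obtain u v where "x = u @ v" "u \<in> M" "v \<in> lpow M n" by (auto simp: lconc_def)
    then have "v @ y \<in> lstar M" using Suc by auto
    then obtain m where "v @ y \<in> lpow M m" by (auto simp: lstar_def)
    then have "u @ (v @ y) \<in> lpow M (Suc m)" using \<open>u \<in> M\<close> by (auto simp: lconc_def)
    then show ?case using \<open>x = u @ v\<close> unfolding lstar_def by (metis UN_I UNIV_I append_assoc)
  qed
qed

lemma lstar_single: "x \<in> M \<Longrightarrow> x \<in> lstar M"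
  unfolding lstar_def by (rule UN_I[of 1]) (auto simp: lconc_def)

lemma lstar_mono: assumes "\<And>x. x \<in> L \<Longrightarrow> x \<in> lstar M" shows "lstar L \<subseteq> lstar M"
proof
  fix x assume "x \<in> lstar L"
  then obtain n where "x \<in> lpow L n" by (auto simp: lstar_def)
  then show "x \<in> lstar M"
  proof (induction n arbitrary: x)
    case 0 then show ?case unfolding lstar_def using lpow.simps(1) by blast
  next
    case (Suc n)
    then obtain u v where "x = u @ v" "u \<in> L" "v \<in> lpow L n" by (auto simp: lconc_def)
    then show ?case using Suc assms lstar_app by blast
  qed
qed

lemma lstar_len: assumes "\<And>v. v \<in> L \<Longrightarrow> P (length v)" "P 0"
  "\<And>a b. P a \<Longrightarrow> P b \<Longrightarrow> P (a + b)" and "x \<in> lstar L" shows "P (length x)"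
proof -
  obtain n where "x \<in> lpow L n" using assms(4) by (auto simp: lstar_def)
  then show ?thesis
  proof (induction n arbitrary: x)
    case 0 then show ?case using assms(2) by simp
  next
    case (Suc n)
    then obtain u v where "x = u @ v" "u \<in> L" "v \<in> lpow L n" by (auto simp: lconc_def)
    then show ?case using Suc assms(1,3) by auto
  qed
qed

lemma per_take: assumes "per q p" shows "per (take m q) p"
  unfolding per_def
proof (intro allI impI)
  fix i assume i: "p \<le> i \<and> i < length (take m q)"
  then have "q!i = q!(i-p)" using assms unfolding per_def by auto
  then show "take m q ! i = take m q ! (i - p)" using i by (simp add: less_imp_diff_less)
qed

lemma per_self: "per w (length w)"
  unfolding per_def by auto

lemma Pq_take: assumes "per q p" "0 < p" "p \<le> m" "m \<le> length q" shows "take p q \<in> Pq (take m q)"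
proof -
  have "take p (take m q) = take p q" using assms by (simp add: min_def)
  then show ?thesis unfolding Pq_iff using assms per_take[OF assms(1)] by simp
qed

theorem lemma4:
  fixes X :: "'a set" and q q0 :: "'a list"
  assumes "finite X"
    and "q \<in> lists X" and "q \<noteq> []"
    and "q0 \<in> Pq q" and "\<forall>v \<in> Pq q. length q0 \<le> length v"
  shows "(\<not> length q0 dvd length q \<and> real (length q0) \<le> real (length q) / 2
           \<longrightarrow> (\<exists>q' \<in> lists X - {[]}. lstar (Pq q) \<subset> lstar (Pq q')))
       \<and> (\<not> length q0 dvd length q
           \<and> \<not> (\<exists>q' \<in> lists X - {[]}. lstar (Pq q) \<subset> lstar (Pq q'))
           \<longrightarrow> real (length q0) > real (length q) / 2)"
proof -
  have main: "\<exists>q' \<in> lists X - {[]}. lstar (Pq q) \<subset> lstar (Pq q')"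
    if nd: "\<not> length q0 dvd length q" and le: "real (length q0) \<le> real (length q) / 2"
  proof -
    define n where "n = length q"
    define p0 where "p0 = length q0"
    have q0: "q0 = take p0 q" "0 < p0" "p0 \<le> n" "per q p0"
      using assms(4) unfolding Pq_iff p0_def n_def by blast+
    have le2: "2 * p0 \<le> n" using le by (simp add: p0_def n_def)
    define q' where "q' = take (n - p0) q"
    have lq': "length q' = n - p0" by (simp add: q'_def n_def)
    have q'nth: "q'!i = q!i" if "i < n - p0" for i using that by (simp add: q'_def)
    have q'in: "q' \<in> lists X - {[]}"
    proof (rule DiffI)
      show "q' \<in> lists X" using assms(2) unfolding q'_def by (auto dest: in_set_takeD)
      show "q' \<notin> {[]}" using lq' le2 q0(2) by auto
    qed
    have minp: "p0 \<le> p" if "0 < p" "p \<le> n" "per q p" for p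
    proof -
      have "take p q \<in> Pq q" using that by (simp add: Pq_iff n_def min_def)
      then show ?thesis using assms(5) that by (auto simp: p0_def n_def)
    qed
    have short: "p0 dvd p" if "0 < p" "p \<le> n - p0" "per q p" for p
    proof -
      have g: "per q (gcd p p0)" using fine_wilf[OF that(3) q0(4) that(1) q0(2)] that q0 n_def by auto
      have gl: "gcd p p0 \<le> p0" using q0(2) by (simp add: gcd_le2_nat)
      moreover have "p0 \<le> gcd p p0" using minp[OF _ _ g] gl that q0 by simp
      ultimately have "gcd p p0 = p0" by simp
      then show ?thesis by (metis gcd_dvd1)
    qed
    have sub: "v \<in> lstar (Pq q')" if v: "v \<in> Pq q" for v
    proof -
      define p where "p = length v"
      have vp: "v = take p q" "0 < p" "p \<le> n" "per q p" using v unfolding Pq_iff p_def n_def by blast+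
      show ?thesis
      proof (cases "p \<le> n - p0")
        case True
        have "v \<in> Pq q'" unfolding q'_def vp(1) using vp True n_def by (intro Pq_take) auto
        then show ?thesis by (rule lstar_single)
      next
        case False
        define w where "w = take (p - p0) q'"
        have lw: "length w = p - p0" using False lq' vp by (simp add: w_def)
        have "w \<in> Pq q'" unfolding Pq_iff lw
        proof (intro conjI)
          show "w = take (p - p0) q'" by (simp add: w_def)
          show "0 < p - p0" using False le2 by auto
          show "p - p0 \<le> length q'" using lq' vp by auto
          show "per q' (p - p0)" unfolding per_def
          proof (intro allI impI)
            fix i assume i: "p - p0 \<le> i \<and> i < length q'"
            have "i < n - p0" using i lq' by simp
            then have "q'!i = q!i" by (rule q'nth)
            also have "\<dots> = q!(i+p0-p0)" by simp
            also have "\<dots> = q!(i+p0)"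
            proof -
              have "i < n - p0" using i lq' by simp
              then have "p0 \<le> i+p0" "i+p0 < length q" unfolding n_def by linarith+
              then have "q!(i+p0) = q!(i+p0-p0)" using q0(4) unfolding per_def by blast
              then show ?thesis by simp
            qed
            also have "\<dots> = q!(i+p0-p)"
            proof -
              have "p \<le> i+p0" "i+p0 < length q" using i lq' False le2 vp n_def by auto
              then show ?thesis using vp(4) unfolding per_def by blast
            qed
            also have "\<dots> = q'!(i-(p-p0))"
            proof -
              have e: "i+p0-p = i-(p-p0)" using i False le2 lq' by auto
              have "i-(p-p0) < n - p0" using i lq' by auto
              then show ?thesis using e q'nth[of "i-(p-p0)"] by metis
            qed
            finally show "q'!i = q'!(i-(p-p0))" .
          qed
        qed
        moreover have "v = q0 @ w"
        proof (rule nth_equalityI)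
          show "length v = length (q0 @ w)" using q0 lw False le2 p_def n_def by simp
          fix i assume "i < length v"
          then have i: "i < p" using p_def by simp
          show "v!i = (q0 @ w)!i"
          proof (cases "i < p0")
            case True then show ?thesis using vp q0 i n_def by (simp add: nth_append)
          next
            case False
            have "v!i = q!i" using vp i by simp
            also have "\<dots> = q!(i-p0)"
            proof -
              have "p0 \<le> i" "i < length q" using False i vp n_def by auto
              then show ?thesis using q0(4) unfolding per_def by blast
            qed
            also have "\<dots> = w!(i-p0)" using i False lw vp by (simp add: w_def q'nth)
            finally show ?thesis using False q0 n_def by (simp add: nth_append)
          qed
        qed
        moreover have "q0 \<in> Pq q'" unfolding q'_def q0(1) using q0 le2 n_def by (intro Pq_take) auto
        ultimately show ?thesis using lstar_app[OF lstar_single lstar_single] by metis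
      qed
    qed
    have "q' \<in> lstar (Pq q')" 
    proof (rule lstar_single)
      have "q' = take (length q') q'" by simp
      then show "q' \<in> Pq q'" unfolding Pq_iff using lq' le2 q0(2) per_self[of q'] by auto
    qed
    moreover have "q' \<notin> lstar (Pq q)"
    proof
      assume "q' \<in> lstar (Pq q)"
      then have "p0 dvd length q' \<or> n - p0 < length q'"
      proof (rule lstar_len[where P="\<lambda>l. p0 dvd l \<or> n - p0 < l", rotated 3])
        fix v assume "v \<in> Pq q"
        then have "0 < length v" "length v \<le> n" "per q (length v)" unfolding Pq_iff n_def by blast+
        then show "p0 dvd length v \<or> n - p0 < length v" using short[of "length v"] by (cases "length v \<le> n - p0") auto
      qed auto
      then have "p0 dvd n - p0" using lq' by simp
      then have "p0 dvd n" by (rule dvd_diffD[OF _ dvd_refl q0(3)])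
      then show False using nd by (simp add: p0_def n_def)
    qed
    moreover have "lstar (Pq q) \<subseteq> lstar (Pq q')" using lstar_mono[of "Pq q" "Pq q'"] sub by blast
    ultimately have "lstar (Pq q) \<subset> lstar (Pq q')" by blast
    then show ?thesis using q'in by blast
  qed
  show ?thesis
  proof (intro conjI impI)
    assume "\<not> length q0 dvd length q \<and> real (length q0) \<le> real (length q) / 2"
    then show "\<exists>q' \<in> lists X - {[]}. lstar (Pq q) \<subset> lstar (Pq q')" using main by blast
  next
    assume a: "\<not> length q0 dvd length q \<and> \<not> (\<exists>q' \<in> lists X - {[]}. lstar (Pq q) \<subset> lstar (Pq q'))"
    show "real (length q0) > real (length q) / 2"
    proof (rule ccontr)
      assume "\<not> real (length q0) > real (length q) / 2"
      then have "real (length q0) \<le> real (length q) / 2" by simp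
      then show False using main a by blast
    qed
  qed
qed

end
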